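(* Let $I\subseteq\mathbb{R}_+$ be a nonempty, non-singleton interval, let $n\in\mathbb{N}$, and let $\Phi: I\to\mathbb{R}_+$ be subadditive of order $n$. Then $\sqrt[n]{\Phi}$ is subadditive on $I$, i.e. $\sqrt[n]{\Phi(x+y)}\leq\sqrt[n]{\Phi(x)}+\sqrt[n]{\Phi(y)}$ for all $x,y\in I$ with $x+y\in I$.
   Context: $\mathbb{R}_+$ denotes the set of nonnegative real numbers. For $n\in\mathbb{N}$, a function $\Phi: I\to\mathbb{R}_+$ is called subadditive of order $n$ if for all $x,y\in I$ with $y>0$ and $x+y\in I$ one has $\Phi(x+y)\leq \Phi(x)+\frac{(x+y)^n-x^n}{y^n}\Phi(y)$. *)

theory Defs
  imports "HOL-Analysis.Analysis"
begin

definition subadditive_of_order :: "nat \<Rightarrow> real set \<Rightarrow> (real \<Rightarrow> real) \<Rightarrow> bool" where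
  "subadditive_of_order n I \<Phi> \<longleftrightarrow>
     (\<forall>x\<in>I. \<forall>y\<in>I. y > 0 \<longrightarrow> x + y \<in> I \<longrightarrow>
        \<Phi> (x + y) \<le> \<Phi> x + ((x + y) ^ n - x ^ n) / y ^ n * \<Phi> y)"

definition subadditive_on :: "real set \<Rightarrow> (real \<Rightarrow> real) \<Rightarrow> bool" where
  "subadditive_on I f \<longleftrightarrow> (\<forall>x\<in>I. \<forall>y\<in>I. x + y \<in> I \<longrightarrow> f (x + y) \<le> f x + f y)"

end

theory Submission
  imports Defs
begin

lemma mono_diff_pow:
  fixes u v d :: real and n :: nat
  assumes "0 \<le> u" "u \<le> v" "0 \<le> d"
  shows "(u + d) ^ n - u ^ n \<le> (v + d) ^ n - v ^ n"
proof -
  have e1: "(u + d) ^ n - u ^ n = d * (\<Sum>i<n. u ^ (n - Suc i) * (u + d) ^ i)"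
    using power_diff_sumr2[of "u+d" n u] by simp
  have e2: "(v + d) ^ n - v ^ n = d * (\<Sum>i<n. v ^ (n - Suc i) * (v + d) ^ i)"
    using power_diff_sumr2[of "v+d" n v] by simp
  have "(\<Sum>i<n. u ^ (n - Suc i) * (u + d) ^ i) \<le> (\<Sum>i<n. v ^ (n - Suc i) * (v + d) ^ i)"
    by (rule sum_mono, rule mult_mono) (use assms in \<open>auto intro: power_mono\<close>)
  then show ?thesis unfolding e1 e2 using assms(3) by (simp add: mult_left_mono)
qed

lemma key:
  fixes a b x y :: real and n :: nat
  assumes "0 \<le> a" "0 \<le> b" "0 < x" "0 < y" "b * x \<le> a * y"
  shows "a ^ n + ((x + y) ^ n - x ^ n) / y ^ n * b ^ n \<le> (a + b) ^ n"
proof -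
  define c where "c = b / y"
  have c0: "0 \<le> c" using assms by (simp add: c_def)
  have cx: "c * x \<le> a" using assms by (simp add: c_def field_simps)
  have cy: "c * y = b" using assms by (simp add: c_def)
  have "((x + y) ^ n - x ^ n) / y ^ n * b ^ n = ((x + y) ^ n - x ^ n) * c ^ n"
    using assms by (simp add: c_def power_divide)
  also have "\<dots> = (c * x + b) ^ n - (c * x) ^ n"
  proof -
    have "c * x + b = c * (x + y)" using cy by (simp add: distrib_left)
    then show ?thesis by (simp add: power_mult_distrib right_diff_distrib mult.commute)
  qed
  also have "\<dots> \<le> (a + b) ^ n - a ^ n"
    by (rule mono_diff_pow) (use c0 assms cx in auto)
  finally show ?thesis by simp
qed

theorem theorem2p3:
  fixes I :: "real set" and n :: nat and \<Phi> :: "real \<Rightarrow> real"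
  assumes "is_interval I" and "I \<subseteq> {0..}" and "\<exists>a\<in>I. \<exists>b\<in>I. a \<noteq> b"
    and "n \<ge> 1"
    and "\<forall>x\<in>I. \<Phi> x \<ge> 0"
    and "subadditive_of_order n I \<Phi>"
  shows "subadditive_on I (\<lambda>x. root n (\<Phi> x))"
  unfolding subadditive_on_def
proof (intro ballI impI)
  fix x y assume xI: "x \<in> I" and yI: "y \<in> I" and xyI: "x + y \<in> I"
  have n0: "0 < n" using assms(4) by simp
  define a where "a = root n (\<Phi> x)"
  define b where "b = root n (\<Phi> y)"
  have a0: "0 \<le> a" and b0: "0 \<le> b" using assms(5) xI yI by (auto simp: a_def b_def intro!: real_root_ge_zero)
  have pa: "a ^ n = \<Phi> x" and pb: "b ^ n = \<Phi> y"
    using assms(5) xI yI n0 by (auto simp: a_def b_def real_root_pow_pos2)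
  have x0: "0 \<le> x" and y0: "0 \<le> y" using assms(2) xI yI by auto
  show "root n (\<Phi> (x + y)) \<le> root n (\<Phi> x) + root n (\<Phi> y)"
  proof (cases "x = 0 \<or> y = 0")
    case True then show ?thesis using a0 b0 by (auto simp: a_def b_def)
  next
    case False
    then have xp: "0 < x" and yp: "0 < y" using x0 y0 by auto
    have "\<Phi> (x + y) \<le> (a + b) ^ n"
    proof (cases "b * x \<le> a * y")
      case True
      have "\<Phi> (x + y) \<le> \<Phi> x + ((x + y) ^ n - x ^ n) / y ^ n * \<Phi> y"
        using assms(6) xI yI xyI yp unfolding subadditive_of_order_def by blast
      also have "\<dots> \<le> (a + b) ^ n" using key[OF a0 b0 xp yp True, of n] pa pb by simp
      finally show ?thesis .
    next
      case False
      have "\<Phi> (y + x) \<le> \<Phi> y + ((y + x) ^ n - y ^ n) / x ^ n * \<Phi> x"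
        using assms(6) xI yI xyI xp unfolding subadditive_of_order_def
        by (metis add.commute)
      also have "\<dots> \<le> (b + a) ^ n" using key[OF b0 a0 yp xp, of n] False pa pb by simp
      finally show ?thesis by (simp add: add.commute)
    qed
    then have "root n (\<Phi> (x + y)) \<le> root n ((a + b) ^ n)"
      using n0 by simp
    also have "\<dots> = a + b" using a0 b0 n0 by (simp add: real_root_power_cancel)
    finally show ?thesis by (simp add: a_def b_def)
  qed
qed

end
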